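(* Let $m=p_1^{\alpha_1}p_2^{\alpha_2}$, where $p_1,p_2>2$ are distinct primes and $\alpha_1,\alpha_2$ are positive integers. Let $t=\mathrm{ord}_m(2)$ and let $\gamma\in\mathbb{F}_{2^t}^*$ be a primitive $m$th root of unity. Let $E=\{e\in\mathbb{Z}: p_1^{\alpha_1}\nmid e,\ p_2^{\alpha_2}\nmid e\}$. Then $m$ is good if and only if there exist $u,v\in E$ with $u\not\equiv v\pmod m$ and $\det(A)=0$, where $$A=\begin{pmatrix}\gamma^{s_{01}u}&\gamma^{s_{01}v}&1\\ \gamma^{s_{10}u}&\gamma^{s_{10}v}&1\\ \gamma^{u}&\gamma^{v}&1\end{pmatrix}.$$
   Context: $\mathrm{ord}_m(2)$ is the multiplicative order of $2$ modulo $m$. The canonical set of $m$ is $S_m=\{s_{01},s_{10},s_{11}\}\subseteq\mathbb{Z}_m$, where for $\sigma=(\sigma_1,\sigma_2)\in\{0,1\}^2\setminus\{(0,0)\}$, $s_\sigma$ is the unique element of $\mathbb{Z}_m$ with $s_\sigma\equiv\sigma_1 \pmod{p_1^{\alpha_1}}$ and $s_\sigma\equiv \sigma_2\pmod{p_2^{\alpha_2}}$ (so $s_{11}=1$). An $S_m$-decoding polynomial is a polynomial $P(X)\in\mathbb{F}_{2^t}[X]$ such that $P(\gamma^s)=0$ for every $s\in S_m$ and $P(1)=1$. The number $m$ is called good if there exists an $S_m$-decoding polynomial with fewer than $4$ monomials (nonzero terms). *)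

theory Defs
  imports "HOL-Analysis.Analysis" "HOL-Computational_Algebra.Polynomial" "HOL-Number_Theory.Number_Theory"
begin

definition canon_elem :: "nat \<Rightarrow> nat \<Rightarrow> nat \<Rightarrow> nat \<Rightarrow> nat \<Rightarrow> nat \<Rightarrow> nat" where
  "canon_elem p1 a1 p2 a2 \<sigma>1 \<sigma>2 =
     (THE s. s < p1^a1 * p2^a2 \<and> [s = \<sigma>1] (mod p1^a1) \<and> [s = \<sigma>2] (mod p2^a2))"

definition canonical_set :: "nat \<Rightarrow> nat \<Rightarrow> nat \<Rightarrow> nat \<Rightarrow> nat set" where
  "canonical_set p1 a1 p2 a2 =
     {canon_elem p1 a1 p2 a2 0 1, canon_elem p1 a1 p2 a2 1 0, canon_elem p1 a1 p2 a2 1 1}"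

definition decoding_poly :: "nat set \<Rightarrow> 'a::field \<Rightarrow> 'a poly \<Rightarrow> bool" where
  "decoding_poly S \<gamma> P \<longleftrightarrow> (\<forall>s\<in>S. poly P (\<gamma> ^ s) = 0) \<and> poly P 1 = 1"

definition num_monomials :: "'a::zero poly \<Rightarrow> nat" where
  "num_monomials P = card {i. Polynomial.coeff P i \<noteq> 0}"

definition good :: "nat \<Rightarrow> nat \<Rightarrow> nat \<Rightarrow> nat \<Rightarrow> 'a::field \<Rightarrow> bool" where
  "good p1 a1 p2 a2 \<gamma> \<longleftrightarrow>
     (\<exists>P. decoding_poly (canonical_set p1 a1 p2 a2) \<gamma> P \<and> num_monomials P < 4)"

end

theory Submission
  imports Defs
begin

lemma detK:
  fixes a b c :: "'a::field"
  assumes "a*y1+b*y2+c=0" "a*x1+b*x2+c=0" "a*z1+b*z2+c=0" "a\<noteq>0 \<or> b\<noteq>0 \<or> c\<noteq>0"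
  shows "y1*x2 + y2*z1 + x1*z2 - y1*z2 - y2*x1 - x2*z1 = 0"
proof -
  have "a * (y1*x2 + y2*z1 + x1*z2 - y1*z2 - y2*x1 - x2*z1) = 0"
    using assms(1-3) by Groebner_Basis.algebra
  moreover have "b * (y1*x2 + y2*z1 + x1*z2 - y1*z2 - y2*x1 - x2*z1) = 0"
    using assms(1-3) by Groebner_Basis.algebra
  moreover have "c * (y1*x2 + y2*z1 + x1*z2 - y1*z2 - y2*x1 - x2*z1) = 0"
    using assms(1-3) by Groebner_Basis.algebra
  ultimately show ?thesis using assms(4) by auto
qed

lemma two_term:
  fixes c1 c2 x1 x2 y1 y2 :: "'a::field"
  assumes "c1+c2=1" "c1*y1+c2*y2=0" "c1*x1+c2*x2=0" "c1*(x1*y1)+c2*(x2*y2)=0"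
    "x1\<noteq>0" "x2\<noteq>0" "y1\<noteq>0" "y2\<noteq>0"
  shows False
proof -
  have "c1*x1*(y1-y2) = 0" using assms(3,4) by Groebner_Basis.algebra
  moreover have "c1 \<noteq> 0" using assms by auto
  ultimately have "y1 = y2" using assms by auto
  then have "y1 * (c1+c2) = 0" using assms(2) by (simp add: algebra_simps)
  then show False using assms by auto
qed

lemma three_term:
  fixes c1 c2 c3 x1 x2 x3 y1 y2 y3 :: "'a::field"
  assumes "c1+c2+c3=1" "c1*y1+c2*y2+c3*y3=0" "c1*x1+c2*x2+c3*x3=0" "c1*(x1*y1)+c2*(x2*y2)+c3*(x3*y3)=0"
    "x1\<noteq>0" "x2\<noteq>0" "x3\<noteq>0" "y1\<noteq>0" "y2\<noteq>0" "y3\<noteq>0"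
  shows "x1 \<noteq> x2"
proof
  assume e: "x1 = x2"
  have "c3*y3*(x3-x1) = 0" using assms(2,4) e by Groebner_Basis.algebra
  then consider "c3 = 0" | "x3 = x1" using assms by auto
  then show False
  proof cases
    case 1
    then show ?thesis using two_term[of c1 c2 y1 y2 x1 x2] assms by auto
  next
    case 2
    then have "x1*(c1+c2+c3) = 0" using e assms(3) by (simp add: algebra_simps)
    then show ?thesis using assms by auto
  qed
qed

lemma solve:
  fixes x y x' y' :: "'a::field"
  assumes "x\<noteq>1" "y\<noteq>1" "x'\<noteq>1" "y'\<noteq>1" "x\<noteq>x' \<or> y\<noteq>y'"
    and D: "y*x' + y'*(x*y) + x*(x'*y') - y*(x'*y') - y'*x - x'*(x*y) = 0"
  shows "\<exists>a b c. a+b+c=1 \<and> a*y+b*y'+c=0 \<and> a*x+b*x'+c=0 \<and> a*(x*y)+b*(x'*y')+c=0"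
proof -
  define X where "X = x-1"
  define Y where "Y = y-1"
  define X' where "X' = x'-1"
  define Y' where "Y' = y'-1"
  have nz: "X\<noteq>0" "Y\<noteq>0" "X'\<noteq>0" "Y'\<noteq>0" using assms X_def Y_def X'_def Y'_def by auto
  show ?thesis
  proof (cases "Y*X' - Y'*X = 0")
    case False
    define a where "a = (Y' - X')/(Y*X' - Y'*X)"
    define b where "b = (X - Y)/(Y*X' - Y'*X)"
    have "a+b+(1-a-b)=1" by simp
    moreover have "a*y+b*y'+(1-a-b)=0"
      using False unfolding a_def b_def X_def Y_def X'_def Y'_def by (simp add: field_simps) Groebner_Basis.algebra
    moreover have "a*x+b*x'+(1-a-b)=0"
      using False unfolding a_def b_def X_def Y_def X'_def Y'_def by (simp add: field_simps) Groebner_Basis.algebra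
    moreover have "a*(x*y)+b*(x'*y')+(1-a-b)=0"
      using False D unfolding a_def b_def X_def Y_def X'_def Y'_def by (simp add: field_simps) Groebner_Basis.algebra
    ultimately show ?thesis by blast
  next
    case True
    have "X \<noteq> X'"
    proof
      assume "X = X'"
      then have "X*(Y - Y') = 0" using True by (simp add: algebra_simps)
      then have "Y = Y'" using nz by auto
      with \<open>X = X'\<close> show False using assms(5) X_def Y_def X'_def Y'_def by auto
    qed
    then have F: "Y*Y'*(X'-X) \<noteq> 0" using nz by auto
    define a where "a = (- X'*Y' - Y')/(Y*Y'*(X'-X))"
    define b where "b = (Y + X*Y)/(Y*Y'*(X'-X))"
    have "a+b+(1-a-b)=1" by simp
    moreover have "a*y+b*y'+(1-a-b)=0"
      using F unfolding a_def b_def X_def Y_def X'_def Y'_def by (simp add: field_simps) Groebner_Basis.algebra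
    moreover have "a*x+b*x'+(1-a-b)=0"
      using F D True unfolding a_def b_def X_def Y_def X'_def Y'_def by (simp add: field_simps) Groebner_Basis.algebra
    moreover have "a*(x*y)+b*(x'*y')+(1-a-b)=0"
      using F D True unfolding a_def b_def X_def Y_def X'_def Y'_def by (simp add: field_simps) Groebner_Basis.algebra
    ultimately show ?thesis by blast
  qed
qed

lemma three_term_all:
  fixes c1 c2 c3 x1 x2 x3 y1 y2 y3 :: "'a::field"
  assumes "c1+c2+c3=1" "c1*y1+c2*y2+c3*y3=0" "c1*x1+c2*x2+c3*x3=0" "c1*(x1*y1)+c2*(x2*y2)+c3*(x3*y3)=0"
    "x1\<noteq>0" "x2\<noteq>0" "x3\<noteq>0" "y1\<noteq>0" "y2\<noteq>0" "y3\<noteq>0"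
  shows "x1 \<noteq> x2 \<and> x1 \<noteq> x3 \<and> x2 \<noteq> x3 \<and> y1 \<noteq> y2 \<and> y1 \<noteq> y3 \<and> y2 \<noteq> y3"
proof -
  have a: "x1 \<noteq> x2" by (rule three_term[of c1 c2 c3 y1 y2 y3 x1 x2 x3]) (use assms in auto)
  have b: "x1 \<noteq> x3" by (rule three_term[of c1 c3 c2 y1 y3 y2 x1 x3 x2]) (use assms in \<open>auto simp: ac_simps\<close>)
  have c: "x2 \<noteq> x3" by (rule three_term[of c2 c3 c1 y2 y3 y1 x2 x3 x1]) (use assms in \<open>auto simp: ac_simps\<close>)
  have d: "y1 \<noteq> y2" by (rule three_term[of c1 c2 c3 x1 x2 x3 y1 y2 y3]) (use assms in \<open>auto simp: ac_simps\<close>)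
  have e: "y1 \<noteq> y3" by (rule three_term[of c1 c3 c2 x1 x3 x2 y1 y3 y2]) (use assms in \<open>auto simp: ac_simps\<close>)
  have f: "y2 \<noteq> y3" by (rule three_term[of c2 c3 c1 x2 x3 x1 y2 y3 y1]) (use assms in \<open>auto simp: ac_simps\<close>)
  show ?thesis using a b c d e f by blast
qed

lemma det_expr:
  fixes y1 y2 x1 x2 z1 z2 :: "'a::field"
  shows "det (vector [vector [y1, y2, 1], vector [x1, x2, 1], vector [z1, z2, 1]] :: 'a ^ 3 ^ 3)
     = y1*x2 + y2*z1 + x1*z2 - y1*z2 - y2*x1 - x2*z1"
  by (simp add: det_3 algebra_simps)

lemma superset_card:
  assumes "finite (I::nat set)" "card I \<le> n"
  shows "\<exists>J. I \<subseteq> J \<and> finite J \<and> card J = n"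
  using assms
proof (induction n arbitrary: I)
  case 0
  then show ?case by auto
next
  case (Suc n)
  show ?case
  proof (cases "card I = Suc n")
    case True
    then show ?thesis using Suc.prems by blast
  next
    case False
    then have "card I \<le> n" using Suc.prems by auto
    then obtain J where J: "I \<subseteq> J" "finite J" "card J = n" using Suc.IH Suc.prems by blast
    obtain x where "x \<notin> J" using J(2) ex_new_if_finite[OF infinite_UNIV_nat] by blast
    then show ?thesis using J by (intro exI[of _ "insert x J"]) auto
  qed
qed

lemma poly_sum_over:
  fixes P :: "'a::comm_semiring_1 poly"
  assumes "finite J" "{i. Polynomial.coeff P i \<noteq> 0} \<subseteq> J"
  shows "poly P z = (\<Sum>i\<in>J. Polynomial.coeff P i * z ^ i)"
proof -
  have "(\<Sum>i\<in>J. Polynomial.coeff P i * z ^ i) = (\<Sum>i\<in>J \<union> {..degree P}. Polynomial.coeff P i * z ^ i)"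
    by (rule sum.mono_neutral_left) (use assms in force)+
  moreover have "(\<Sum>i\<le>degree P. Polynomial.coeff P i * z ^ i) = (\<Sum>i\<in>J \<union> {..degree P}. Polynomial.coeff P i * z ^ i)"
    by (rule sum.mono_neutral_left) (use assms in \<open>auto intro: le_degree\<close>)
  ultimately show ?thesis by (simp add: poly_altdef)
qed

theorem lemma5:
  fixes p1 p2 a1 a2 m :: nat and \<gamma> :: "'a::{field,finite}"
  assumes "prime p1" "prime p2" "p1 > 2" "p2 > 2" "p1 \<noteq> p2"
    and "a1 > 0" "a2 > 0"
    and m_def: "m = p1 ^ a1 * p2 ^ a2"
    and card: "CARD('a) = 2 ^ ord m 2"
    and prim: "\<gamma> ^ m = 1" "\<forall>k. 0 < k \<and> k < m \<longrightarrow> \<gamma> ^ k \<noteq> 1"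
  shows "good p1 a1 p2 a2 \<gamma> \<longleftrightarrow>
    (\<exists>u v :: int.
       \<not> (int (p1 ^ a1) dvd u) \<and> \<not> (int (p2 ^ a2) dvd u) \<and>
       \<not> (int (p1 ^ a1) dvd v) \<and> \<not> (int (p2 ^ a2) dvd v) \<and>
       \<not> [u = v] (mod int m) \<and>
       (let s01 = int (canon_elem p1 a1 p2 a2 0 1);
            s10 = int (canon_elem p1 a1 p2 a2 1 0);
            s11 = int (canon_elem p1 a1 p2 a2 1 1);
            A = (vector [vector [\<gamma> powi (s01 * u), \<gamma> powi (s01 * v), 1],
                         vector [\<gamma> powi (s10 * u), \<gamma> powi (s10 * v), 1],
                         vector [\<gamma> powi (s11 * u), \<gamma> powi (s11 * v), 1]] :: 'a ^ 3 ^ 3)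
        in det A = 0))"
proof -
  define q1 where "q1 = p1 ^ a1"
  define q2 where "q2 = p2 ^ a2"
  have mq: "m = q1 * q2" using m_def q1_def q2_def by simp
  have cop: "coprime q1 q2" unfolding q1_def q2_def
    using primes_coprime[OF assms(1,2,5)] by simp
  have q1g: "q1 > 1" unfolding q1_def using one_less_power[of p1 a1] assms(3,6) by simp
  have q2g: "q2 > 1" unfolding q2_def using one_less_power[of p2 a2] assms(4,7) by simp
  have mg: "m > 1" using mq q1g q2g by (simp add: one_less_mult)
  have canon: "canon_elem p1 a1 p2 a2 s1 s2 < m \<and> [canon_elem p1 a1 p2 a2 s1 s2 = s1] (mod q1)
      \<and> [canon_elem p1 a1 p2 a2 s1 s2 = s2] (mod q2)" for s1 s2
  proof -
    have "\<exists>!x. x < q1 * q2 \<and> [x = s1] (mod q1) \<and> [x = s2] (mod q2)"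
      by (rule binary_chinese_remainder_unique_nat) (use cop q1g q2g in auto)
    from theI'[OF this] show ?thesis unfolding canon_elem_def q1_def q2_def m_def .
  qed
  have s11: "canon_elem p1 a1 p2 a2 1 1 = 1"
  proof -
    have "\<exists>!x. x < q1 * q2 \<and> [x = 1] (mod q1) \<and> [x = 1] (mod q2)"
      by (rule binary_chinese_remainder_unique_nat) (use cop q1g q2g in auto)
    moreover have "1 < q1 * q2" using mg mq by simp
    ultimately show ?thesis using canon[of 1 1] mq by (auto simp: cong_refl)
  qed
  define s01 where "s01 = canon_elem p1 a1 p2 a2 0 1"
  define s10 where "s10 = canon_elem p1 a1 p2 a2 1 0"
  have d01a: "int q1 dvd int s01" using canon[of 0 1] unfolding s01_def
    by (metis cong_0_iff cong_int_iff of_nat_0 int_dvd_int_iff)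
  have d01b: "int q2 dvd int s01 - 1" using canon[of 0 1] unfolding s01_def
    by (metis cong_iff_dvd_diff cong_int_iff of_nat_1)
  have d10a: "int q2 dvd int s10" using canon[of 1 0] unfolding s10_def
    by (metis cong_0_iff cong_int_iff of_nat_0 int_dvd_int_iff)
  have d10b: "int q1 dvd int s10 - 1" using canon[of 1 0] unfolding s10_def
    by (metis cong_iff_dvd_diff cong_int_iff of_nat_1)
  have copi: "coprime (int q1) (int q2)" using cop by simp
  have msum: "int m dvd int s01 + int s10 - 1"
  proof -
    have "int q1 dvd int s01 + (int s10 - 1)" using d01a d10b by simp
    moreover have "int q2 dvd (int s01 - 1) + int s10" using d01b d10a by simp
    ultimately show ?thesis using divides_mult[OF _ _ copi] mq
      by (simp add: algebra_simps)
  qed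
  have g0: "\<gamma> \<noteq> 0" using prim(1) mg by (metis power_0_left less_numeral_extra(3) zero_neq_one gr_implies_not0)
  have pw2: "\<gamma> powi e = 1" if dv: "int m dvd e" for e
  proof -
    obtain k where "e = int m * k" using dv by blast
    then show ?thesis by (simp add: power_int_mult prim(1))
  qed
  have pw1: "int m dvd e" if "\<gamma> powi e = 1" for e
  proof -
    define r where "r = e mod int m"
    have r0: "0 \<le> r" "r < int m" using mg unfolding r_def by auto
    have "e = int m * (e div int m) + r" unfolding r_def by simp
    then have "\<gamma> powi e = \<gamma> powi (int m * (e div int m)) * \<gamma> powi r"
      using g0 by (metis power_int_add)
    also have "\<gamma> powi (int m * (e div int m)) = 1" by (rule pw2) simp
    finally have "\<gamma> ^ nat r = 1" using that r0 by (simp add: power_int_nonneg_exp)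
    then have "nat r = 0" using prim(2) r0 by (metis nat_less_iff not_gr0)
    then show ?thesis using r0 unfolding r_def by (simp add: dvd_eq_mod_eq_0)
  qed
  have congpow: "\<gamma> powi e = \<gamma> powi f" if "[e = f] (mod int m)" for e f
  proof -
    have "\<gamma> powi (e - f) = 1" using that by (intro pw2) (simp add: cong_iff_dvd_diff)
    then show ?thesis using g0 by (simp add: power_int_diff)
  qed
  define X where "X e = \<gamma> powi (int s10 * e)" for e
  define Y where "Y e = \<gamma> powi (int s01 * e)" for e
  have Xnz: "X e \<noteq> 0" for e unfolding X_def using g0 by simp
  have Ynz: "Y e \<noteq> 0" for e unfolding Y_def using g0 by simp
  have XY: "\<gamma> powi e = X e * Y e" for e
  proof -
    have "[int s10 * e + int s01 * e = e] (mod int m)"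
      using msum unfolding cong_iff_dvd_diff
      by (metis (no_types) dvd_mult2 left_diff_distrib' mult_1 distrib_right add.commute)
    then have "\<gamma> powi e = \<gamma> powi (int s10 * e + int s01 * e)" using congpow by (metis cong_sym)
    then show ?thesis unfolding X_def Y_def using g0 by (simp add: power_int_add)
  qed
  have X1: "X e = 1 \<longleftrightarrow> int q1 dvd e" for e
  proof
    assume "X e = 1"
    then have "int m dvd int s10 * e" unfolding X_def by (rule pw1)
    then have "int q1 dvd int s10 * e" using mq by (metis dvd_mult_left of_nat_mult)
    moreover have "int q1 dvd (int s10 - 1) * e" using d10b by simp
    ultimately have "int q1 dvd int s10 * e - (int s10 - 1) * e" by (rule dvd_diff)
    then show "int q1 dvd e" by (simp add: algebra_simps)
  next
    assume "int q1 dvd e"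
    then have "int q2 * int q1 dvd int s10 * e" by (intro mult_dvd_mono[OF d10a])
    then show "X e = 1" unfolding X_def using mq by (intro pw2) (simp add: mult.commute)
  qed
  have Y1: "Y e = 1 \<longleftrightarrow> int q2 dvd e" for e
  proof
    assume "Y e = 1"
    then have "int m dvd int s01 * e" unfolding Y_def by (rule pw1)
    then have "int q2 dvd int s01 * e" using mq by (metis dvd_mult_right of_nat_mult)
    moreover have "int q2 dvd (int s01 - 1) * e" using d01b by simp
    ultimately have "int q2 dvd int s01 * e - (int s01 - 1) * e" by (rule dvd_diff)
    then show "int q2 dvd e" by (simp add: algebra_simps)
  next
    assume "int q2 dvd e"
    then have "int q1 * int q2 dvd int s01 * e" by (intro mult_dvd_mono[OF d01a])
    then show "Y e = 1" unfolding Y_def using mq by (intro pw2) (simp add: mult.commute)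
  qed
  have Xdiff: "X (a - b) = X a / X b" for a b
    unfolding X_def using g0 by (simp add: right_diff_distrib power_int_diff)
  have Ydiff: "Y (a - b) = Y a / Y b" for a b
    unfolding Y_def using g0 by (simp add: right_diff_distrib power_int_diff)
  have Xcong: "X u = X v" if "[u = v] (mod int m)" for u v
    unfolding X_def by (rule congpow) (use that in \<open>simp add: cong_mult cong_refl\<close>)
  have Ycong: "Y u = Y v" if "[u = v] (mod int m)" for u v
    unfolding Y_def by (rule congpow) (use that in \<open>simp add: cong_mult cong_refl\<close>)
  have RHS: "(\<exists>u v :: int.
       \<not> (int (p1 ^ a1) dvd u) \<and> \<not> (int (p2 ^ a2) dvd u) \<and>
       \<not> (int (p1 ^ a1) dvd v) \<and> \<not> (int (p2 ^ a2) dvd v) \<and>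
       \<not> [u = v] (mod int m) \<and>
       (let s01 = int (canon_elem p1 a1 p2 a2 0 1);
            s10 = int (canon_elem p1 a1 p2 a2 1 0);
            s11 = int (canon_elem p1 a1 p2 a2 1 1);
            A = (vector [vector [\<gamma> powi (s01 * u), \<gamma> powi (s01 * v), 1],
                         vector [\<gamma> powi (s10 * u), \<gamma> powi (s10 * v), 1],
                         vector [\<gamma> powi (s11 * u), \<gamma> powi (s11 * v), 1]] :: 'a ^ 3 ^ 3)
        in det A = 0)) \<longleftrightarrow>
     (\<exists>u v :: int. X u \<noteq> 1 \<and> Y u \<noteq> 1 \<and> X v \<noteq> 1 \<and> Y v \<noteq> 1 \<and> \<not> [u = v] (mod int m) \<and>
        Y u * X v + Y v * (X u * Y u) + X u * (X v * Y v) - Y u * (X v * Y v) - Y v * X u - X v * (X u * Y u) = 0)"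
    unfolding Let_def s11 of_nat_1 mult_1 det_expr q1_def[symmetric] q2_def[symmetric]
      s01_def[symmetric] s10_def[symmetric] X1[symmetric] Y1[symmetric]
    unfolding X_def[symmetric] Y_def[symmetric]
    unfolding XY by (rule refl)
  have pe2: "(\<gamma> ^ s) ^ n = \<gamma> powi (int s * int n)" for s n
    by (simp add: power_int_mult power_mult)
  have pe: "(\<gamma> ^ s) ^ nat (w mod int m) = \<gamma> powi (int s * w)" for s w
  proof -
    have "int (nat (w mod int m)) = w mod int m" using mg by simp
    then have "(\<gamma> ^ s) ^ nat (w mod int m) = \<gamma> powi (int s * (w mod int m))"
      using pe2[of s "nat (w mod int m)"] by simp
    also have "\<dots> = \<gamma> powi (int s * w)"
      by (rule congpow) (intro cong_mult cong_refl, simp add: cong_def)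
    finally show ?thesis .
  qed
  have CS: "canonical_set p1 a1 p2 a2 = {s01, s10, 1}"
    unfolding canonical_set_def s01_def s10_def s11 ..
  show ?thesis unfolding RHS
  proof
    assume "good p1 a1 p2 a2 \<gamma>"
    then obtain P where dec: "decoding_poly (canonical_set p1 a1 p2 a2) \<gamma> P"
      and nm: "num_monomials P < 4" unfolding good_def by blast
    define I where "I = {i. Polynomial.coeff P i \<noteq> 0}"
    have finI: "finite I" unfolding I_def
      by (rule finite_subset[of _ "{..degree P}"]) (auto intro: le_degree)
    have "card I \<le> 3" using nm unfolding num_monomials_def I_def by simp
    then obtain J where J: "I \<subseteq> J" "finite J" "card J = 3" using superset_card finI by blast
    then obtain i j k where ijk: "J = {i, j, k}" "i \<noteq> j" "j \<noteq> k" "i \<noteq> k"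
      using card_3_iff by metis
    define c where "c l = Polynomial.coeff P l" for l
    have pol: "poly P z = c i * z ^ i + c j * z ^ j + c k * z ^ k" for z
      using poly_sum_over[OF J(2), of P z] J(1) ijk unfolding I_def c_def by (simp add: add.assoc)
    have E1: "c i + c j + c k = 1" using dec pol[of 1] unfolding decoding_poly_def by simp
    have E2: "c i * Y (int i) + c j * Y (int j) + c k * Y (int k) = 0"
      using dec pol[of "\<gamma> ^ s01"] unfolding decoding_poly_def CS Y_def pe2 by simp
    have E3: "c i * X (int i) + c j * X (int j) + c k * X (int k) = 0"
      using dec pol[of "\<gamma> ^ s10"] unfolding decoding_poly_def CS X_def pe2 by simp
    have E4: "c i * (X (int i) * Y (int i)) + c j * (X (int j) * Y (int j)) + c k * (X (int k) * Y (int k)) = 0"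
    proof -
      have "poly P (\<gamma> ^ 1) = 0" using dec unfolding decoding_poly_def CS by simp
      then show ?thesis unfolding pol by (simp add: XY[symmetric])
    qed
    have D: "X (int i) \<noteq> X (int j) \<and> X (int i) \<noteq> X (int k) \<and> X (int j) \<noteq> X (int k) \<and>
        Y (int i) \<noteq> Y (int j) \<and> Y (int i) \<noteq> Y (int k) \<and> Y (int j) \<noteq> Y (int k)"
      by (rule three_term_all[OF E1 E2 E3 E4]) (simp_all add: Xnz Ynz)
    define u where "u = int j - int i"
    define v where "v = int k - int i"
    have Xu: "X u = X (int j) / X (int i)" "X v = X (int k) / X (int i)" unfolding u_def v_def Xdiff by simp_all
    have Yu: "Y u = Y (int j) / Y (int i)" "Y v = Y (int k) / Y (int i)" unfolding u_def v_def Ydiff by simp_all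
    have c1: "X u \<noteq> 1" "X v \<noteq> 1" "Y u \<noteq> 1" "Y v \<noteq> 1" using D Xu Yu Xnz Ynz by auto
    have c2: "\<not> [u = v] (mod int m)"
    proof
      assume "[u = v] (mod int m)"
      then have "X u = X v" by (rule Xcong)
      then show False using D Xu Xnz by (auto simp: divide_cancel_right)
    qed
    have c3: "Y u * X v + Y v * (X u * Y u) + X u * (X v * Y v) - Y u * (X v * Y v) - Y v * X u - X v * (X u * Y u) = 0"
    proof (rule detK[of "c j" "Y u" "c k" "Y v" "c i"])
      show "c j * Y u + c k * Y v + c i = 0" using E2 Ynz unfolding Yu by (simp add: field_simps)
      show "c j * X u + c k * X v + c i = 0" using E3 Xnz unfolding Xu by (simp add: field_simps)
      show "c j * (X u * Y u) + c k * (X v * Y v) + c i = 0" using E4 Xnz Ynz unfolding Xu Yu by (simp add: field_simps)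
      show "c j \<noteq> 0 \<or> c k \<noteq> 0 \<or> c i \<noteq> 0" using E1 by auto
    qed
    show "\<exists>u v. X u \<noteq> 1 \<and> Y u \<noteq> 1 \<and> X v \<noteq> 1 \<and> Y v \<noteq> 1 \<and> \<not> [u = v] (mod int m) \<and>
        Y u * X v + Y v * (X u * Y u) + X u * (X v * Y v) - Y u * (X v * Y v) - Y v * X u - X v * (X u * Y u) = 0"
      using c1 c2 c3 by blast
  next
    assume "\<exists>u v. X u \<noteq> 1 \<and> Y u \<noteq> 1 \<and> X v \<noteq> 1 \<and> Y v \<noteq> 1 \<and> \<not> [u = v] (mod int m) \<and>
        Y u * X v + Y v * (X u * Y u) + X u * (X v * Y v) - Y u * (X v * Y v) - Y v * X u - X v * (X u * Y u) = 0"
    then obtain u v where uv: "X u \<noteq> 1" "Y u \<noteq> 1" "X v \<noteq> 1" "Y v \<noteq> 1" "\<not> [u = v] (mod int m)"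
      and Dz: "Y u * X v + Y v * (X u * Y u) + X u * (X v * Y v) - Y u * (X v * Y v) - Y v * X u - X v * (X u * Y u) = 0"
      by blast
    have ne: "X u \<noteq> X v \<or> Y u \<noteq> Y v"
    proof (rule ccontr)
      assume "\<not> (X u \<noteq> X v \<or> Y u \<noteq> Y v)"
      then have "\<gamma> powi u = \<gamma> powi v" by (simp add: XY)
      then have "\<gamma> powi (u - v) = 1" using g0 by (simp add: power_int_diff)
      then have "int m dvd u - v" by (rule pw1)
      then show False using uv(5) by (simp add: cong_iff_dvd_diff)
    qed
    obtain a b cc where abc: "a+b+cc=1" "a*Y u+b*Y v+cc=0" "a*X u+b*X v+cc=0"
        "a*(X u * Y u)+b*(X v * Y v)+cc=0"
      using solve[of "X u" "Y u" "X v" "Y v", OF uv(1-4) ne Dz] by blast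
    define u' where "u' = nat (u mod int m)"
    define v' where "v' = nat (v mod int m)"
    define P where "P = Polynomial.monom a u' + Polynomial.monom b v' + Polynomial.monom cc 0"
    have polP: "poly P z = a * z ^ u' + b * z ^ v' + cc" for z
      unfolding P_def by (simp add: poly_monom)
    have "decoding_poly (canonical_set p1 a1 p2 a2) \<gamma> P"
      unfolding decoding_poly_def CS
    proof (intro conjI ballI)
      fix s assume "s \<in> {s01, s10, 1}"
      then consider "s = s01" | "s = s10" | "s = 1" by blast
      then show "poly P (\<gamma> ^ s) = 0"
      proof cases
        case 1
        then show ?thesis unfolding polP u'_def v'_def pe using abc(2) by (simp add: Y_def)
      next
        case 2
        then show ?thesis unfolding polP u'_def v'_def pe using abc(3) by (simp add: X_def)
      next
        case 3
        then show ?thesis unfolding polP u'_def v'_def pe using abc(4) by (simp add: XY)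
      qed
    next
      show "poly P 1 = 1" unfolding polP using abc(1) by simp
    qed
    moreover have "num_monomials P < 4"
    proof -
      have sub: "{i. Polynomial.coeff P i \<noteq> 0} \<subseteq> {u', v', 0}" unfolding P_def by auto
      have "card {i. Polynomial.coeff P i \<noteq> 0} \<le> card {u', v', 0}" using card_mono[OF _ sub] by simp
      also have "\<dots> \<le> 3" by (simp add: card_insert_if)
      finally show ?thesis unfolding num_monomials_def by simp
    qed
    ultimately show "good p1 a1 p2 a2 \<gamma>" unfolding good_def by blast
  qed
qed

end
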